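(* Let $(X,\sigma_X)$, $(Y,\sigma_Y)$ be one-sided subshifts, $\pi:X\to Y$ a one-block factor map, $X$ with the specification property, and $\mathcal F=\{\log f_n\}$ an almost additive potential on $X$ with bounded variation. For $i_1\cdots i_n\in B_n(Y)$ let $a_{i_1\cdots i_n}=\tilde g_n(y)$ for $y\in[i_1\cdots i_n]$ (well defined since $\tilde g_n$ depends only on $y_1,\dots,y_n$), and $S_n=\sum_{i_1\cdots i_n\in B_n(Y)}a_{i_1\cdots i_n}$. Then there exist $K_1,K_2>0$ such that $K_1\le e^{nP_Y(\tilde{\mathcal G})}/S_n\le K_2$ for all $n\in\mathbb N$.
   Context: Subshifts: one-sided closed shift-invariant subsets of $\{1,\dots,k\}^{\mathbb N}$; $B_n(Y)$ allowed words of length $n$. Specification: $\exists p>0$ such that for all allowable $u,v$ there is $w$ of length $p$ with $uwv$ allowable. Factor map: continuous surjection commuting with shifts, one-block. Almost additive: $\exists C>0$, $e^{-C}f_n(x)f_m(\sigma^nx)\le f_{n+m}(x)\le e^Cf_n(x)f_m(\sigma^nx)$; bounded variation: $\sup_n\sup\{f_n(x)/f_n(x'):x_i=x'_i,1\le i\le n\}<\infty$. $E_n(y)$: any set with exactly one point from each cylinder $[x_1\cdots x_n]$ of $X$ with $\pi([x_1\cdots x_n])\subseteq[y_1\cdots y_n]$; $g_n(y)=\sup_{E_n(y)}\sum_{x\in E_n(y)}f_n(x)$; $\tilde g_n=g_ne^{-nP_X(\mathcal F)}$; $\tilde{\mathcal G}=\{\log\tilde g_n\}$; $P_Y(\tilde{\mathcal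 G})=\lim_{\epsilon\to0}\limsup_n\frac1n\log\sup_E\sum_{y\in E}\tilde g_n(y)$ over $(n,\epsilon)$-separated sets. *)

theory Defs
  imports "HOL-Analysis.Analysis" "HOL-Library.Liminf_Limsup" "HOL-Library.Extended_Real"
begin

text \<open>Points of the full shift are sequences nat => nat; coordinate x_(i+1) of the paper is x i.\<close>

definition shift :: "(nat \<Rightarrow> nat) \<Rightarrow> (nat \<Rightarrow> nat)" where
  "shift x = (\<lambda>i. x (Suc i))"

definition subshift :: "nat \<Rightarrow> (nat \<Rightarrow> nat) set \<Rightarrow> bool" where
  "subshift k X \<longleftrightarrow> X \<noteq> {} \<and> X \<subseteq> {x. \<forall>i. x i \<in> {1..k}} \<and> closed X \<and> shift ` X \<subseteq> X"

definition cyl :: "nat list \<Rightarrow> (nat \<Rightarrow> nat) set" where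
  "cyl w = {x. \<forall>i<length w. x i = w ! i}"

definition word :: "nat \<Rightarrow> (nat \<Rightarrow> nat) \<Rightarrow> nat list" where
  "word n x = map x [0..<n]"

definition Bn :: "nat \<Rightarrow> (nat \<Rightarrow> nat) set \<Rightarrow> nat list set" where
  "Bn n X = {word n x | x. x \<in> X}"

definition language :: "(nat \<Rightarrow> nat) set \<Rightarrow> nat list set" where
  "language X = (\<Union>n. Bn n X)"

definition has_specification :: "(nat \<Rightarrow> nat) set \<Rightarrow> bool" where
  "has_specification X \<longleftrightarrow> (\<exists>p>0. \<forall>u \<in> language X. \<forall>v \<in> language X.
      u \<noteq> [] \<longrightarrow> v \<noteq> [] \<longrightarrow> (\<exists>w. length w = p \<and> u @ w @ v \<in> language X))"

definition one_block_factor ::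
  "(nat \<Rightarrow> nat) set \<Rightarrow> (nat \<Rightarrow> nat) set \<Rightarrow> ((nat \<Rightarrow> nat) \<Rightarrow> (nat \<Rightarrow> nat)) \<Rightarrow> bool" where
  "one_block_factor X Y \<pi> \<longleftrightarrow> continuous_on X \<pi> \<and> \<pi> ` X = Y \<and>
      (\<forall>x\<in>X. \<pi> (shift x) = shift (\<pi> x)) \<and> (\<exists>\<phi>. \<forall>x\<in>X. \<pi> x = \<phi> \<circ> x)"

definition almost_additive :: "(nat \<Rightarrow> nat) set \<Rightarrow> (nat \<Rightarrow> (nat \<Rightarrow> nat) \<Rightarrow> real) \<Rightarrow> bool" where
  "almost_additive X f \<longleftrightarrow> (\<forall>n\<ge>1. \<forall>x\<in>X. f n x > 0) \<and>
     (\<exists>C>0. \<forall>n\<ge>1. \<forall>m\<ge>1. \<forall>x\<in>X.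
        exp (-C) * f n x * f m ((shift ^^ n) x) \<le> f (n + m) x \<and>
        f (n + m) x \<le> exp C * f n x * f m ((shift ^^ n) x))"

definition bounded_variation :: "(nat \<Rightarrow> nat) set \<Rightarrow> (nat \<Rightarrow> (nat \<Rightarrow> nat) \<Rightarrow> real) \<Rightarrow> bool" where
  "bounded_variation X f \<longleftrightarrow> (\<exists>M. \<forall>n\<ge>1. \<forall>x\<in>X. \<forall>x'\<in>X.
      (\<forall>i<n. x i = x' i) \<longrightarrow> f n x \<le> M * f n x')"

definition seqdist :: "(nat \<Rightarrow> nat) \<Rightarrow> (nat \<Rightarrow> nat) \<Rightarrow> real" where
  "seqdist x y = (if x = y then 0 else (1/2) ^ (LEAST i. x i \<noteq> y i))"

definition separated :: "(nat \<Rightarrow> nat) set \<Rightarrow> nat \<Rightarrow> real \<Rightarrow> (nat \<Rightarrow> nat) set \<Rightarrow> bool" where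
  "separated X n \<epsilon> E \<longleftrightarrow> finite E \<and> E \<subseteq> X \<and>
     (\<forall>x\<in>E. \<forall>y\<in>E. x \<noteq> y \<longrightarrow> (\<exists>i<n. seqdist ((shift ^^ i) x) ((shift ^^ i) y) > \<epsilon>))"

text \<open>Topological pressure of the sequence of potentials {log g_n} on X, via (n,eps)-separated sets.\<close>
definition pressure :: "(nat \<Rightarrow> nat) set \<Rightarrow> (nat \<Rightarrow> (nat \<Rightarrow> nat) \<Rightarrow> real) \<Rightarrow> real" where
  "pressure X g = real_of_ereal (Lim (at_right 0) (\<lambda>\<epsilon>::real.
     limsup (\<lambda>n. ereal (ln (SUP E \<in> {E. separated X n \<epsilon> E}. (\<Sum>x\<in>E. g n x)) / real n))))"

definition En_sets :: "(nat \<Rightarrow> nat) set \<Rightarrow> ((nat \<Rightarrow> nat) \<Rightarrow> (nat \<Rightarrow> nat)) \<Rightarrow> nat \<Rightarrow> (nat \<Rightarrow> nat)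
     \<Rightarrow> (nat \<Rightarrow> nat) set set" where
  "En_sets X \<pi> n y = {E. E \<subseteq> (\<Union>w \<in> {w \<in> Bn n X. \<pi> ` (X \<inter> cyl w) \<subseteq> cyl (word n y)}. X \<inter> cyl w) \<and>
      (\<forall>w \<in> Bn n X. \<pi> ` (X \<inter> cyl w) \<subseteq> cyl (word n y) \<longrightarrow> card (E \<inter> cyl w) = 1)}"

definition gfun :: "(nat \<Rightarrow> nat) set \<Rightarrow> ((nat \<Rightarrow> nat) \<Rightarrow> (nat \<Rightarrow> nat)) \<Rightarrow> (nat \<Rightarrow> (nat \<Rightarrow> nat) \<Rightarrow> real)
     \<Rightarrow> nat \<Rightarrow> (nat \<Rightarrow> nat) \<Rightarrow> real" where
  "gfun X \<pi> f n y = (SUP E \<in> En_sets X \<pi> n y. (\<Sum>x\<in>E. f n x))"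

definition gtilde :: "(nat \<Rightarrow> nat) set \<Rightarrow> ((nat \<Rightarrow> nat) \<Rightarrow> (nat \<Rightarrow> nat)) \<Rightarrow> (nat \<Rightarrow> (nat \<Rightarrow> nat) \<Rightarrow> real)
     \<Rightarrow> nat \<Rightarrow> (nat \<Rightarrow> nat) \<Rightarrow> real" where
  "gtilde X \<pi> f n y = gfun X \<pi> f n y * exp (- real n * pressure X f)"

definition coef_a :: "(nat \<Rightarrow> nat) set \<Rightarrow> (nat \<Rightarrow> nat) set \<Rightarrow> ((nat \<Rightarrow> nat) \<Rightarrow> (nat \<Rightarrow> nat)) \<Rightarrow> (nat \<Rightarrow> (nat \<Rightarrow> nat) \<Rightarrow> real) \<Rightarrow> nat list \<Rightarrow> real" where
  "coef_a X Y \<pi> f w = gtilde X \<pi> f (length w) (SOME y. y \<in> Y \<and> y \<in> cyl w)"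

definition S_sum :: "(nat \<Rightarrow> nat) set \<Rightarrow> (nat \<Rightarrow> nat) set \<Rightarrow> ((nat \<Rightarrow> nat) \<Rightarrow> (nat \<Rightarrow> nat)) \<Rightarrow> (nat \<Rightarrow> (nat \<Rightarrow> nat) \<Rightarrow> real) \<Rightarrow> nat \<Rightarrow> real" where
  "S_sum X Y \<pi> f n = (\<Sum>w \<in> Bn n Y. coef_a X Y \<pi> f w)"

end

theory Submission
  imports Defs
begin


lemma shift_pow_apply: "((shift ^^ n) x) i = x (n + i)"
  by (induction n arbitrary: i) (auto simp: shift_def)

lemma word_length[simp]: "length (word n x) = n"
  by (simp add: word_def)

lemma word_nth: "i < n \<Longrightarrow> word n x ! i = x i"
  by (simp add: word_def)

lemma Bn_length: "u \<in> Bn n X \<Longrightarrow> length u = n"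
  by (auto simp: Bn_def)

lemma in_cyl_iff: "y \<in> cyl (word n x) \<longleftrightarrow> (\<forall>i<n. y i = x i)"
  by (auto simp: cyl_def word_nth)

lemma word_eq_iff: "word n x = word n y \<longleftrightarrow> (\<forall>i<n. x i = y i)"
  by (auto simp: word_def)

lemma cyl_word: "length u = n \<Longrightarrow> x \<in> cyl u \<Longrightarrow> u = word n x"
  by (auto simp: cyl_def word_def intro: nth_equalityI)

lemma word_cyl: "x \<in> cyl (word n x)"
  by (simp add: in_cyl_iff)

lemma Bn_finite: assumes "X \<subseteq> {x. \<forall>i. x i \<in> {1..k}}" shows "finite (Bn n X)"
proof -
  have "Bn n X \<subseteq> {xs. set xs \<subseteq> {1..k} \<and> length xs = n}"
    using assms unfolding Bn_def word_def by fastforce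
  thus ?thesis by (rule finite_subset) (simp add: finite_lists_length_eq)
qed

lemma take_word: "n \<le> N \<Longrightarrow> take n (word N x) = word n x"
  by (simp add: word_def take_map)

lemma drop_word: "drop n (word (n + m) x) = word m ((shift ^^ n) x)"
  by (rule nth_equalityI) (auto simp: word_nth shift_pow_apply)

lemma lim_sandwich_n:
  fixes x :: "nat \<Rightarrow> real"
  assumes "\<And>n. n \<ge> 1 \<Longrightarrow> \<bar>x n - real n * Q\<bar> \<le> D"
  shows "(\<lambda>n. x n / real n) \<longlonglongrightarrow> Q"
proof (rule tendsto_sandwich[of "\<lambda>n. Q - D / real n" _ _ "\<lambda>n. Q + D / real n"])
  show "\<forall>\<^sub>F n in sequentially. Q - D / real n \<le> x n / real n"
    using eventually_ge_at_top[of 1]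
  proof eventually_elim
    case (elim n)
    have "x n \<ge> real n * Q - D" using assms[OF elim] by linarith
    hence "x n / real n \<ge> (real n * Q - D) / real n" using elim by (simp add: divide_right_mono)
    thus ?case using elim by (simp add: diff_divide_distrib)
  qed
  show "\<forall>\<^sub>F n in sequentially. x n / real n \<le> Q + D / real n"
    using eventually_ge_at_top[of 1]
  proof eventually_elim
    case (elim n)
    have "x n \<le> real n * Q + D" using assms[OF elim] by linarith
    hence "x n / real n \<le> (real n * Q + D) / real n" using elim by (simp add: divide_right_mono)
    thus ?case using elim by (simp add: add_divide_distrib)
  qed
  show "(\<lambda>n. Q - D / real n) \<longlonglongrightarrow> Q"
    using tendsto_diff[OF tendsto_const[of Q] lim_const_over_n[of D]] by simp
  show "(\<lambda>n. Q + D / real n) \<longlonglongrightarrow> Q"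
    using tendsto_add[OF tendsto_const[of Q] lim_const_over_n[of D]] by simp
qed

lemma quasi_mult:
  fixes s :: "nat \<Rightarrow> real"
  assumes pos: "\<And>n. n \<ge> 1 \<Longrightarrow> s n > 0" and A: "A > 0" and B: "B > 0"
    and up: "\<And>n m. n \<ge> 1 \<Longrightarrow> m \<ge> 1 \<Longrightarrow> s (n + m) \<le> A * s n * s m"
    and lo: "\<And>n m. n \<ge> 1 \<Longrightarrow> m \<ge> 1 \<Longrightarrow> B * s n * s m \<le> s (n + m)"
  shows "\<exists>Q. \<forall>n\<ge>1. ln B + ln (s n) \<le> real n * Q \<and> real n * Q \<le> ln A + ln (s n)"
proof -
  define b where "b n = ln A + ln (s n)" for n
  define c where "c n = ln B + ln (s n)" for n
  have bsub: "b (n + m) \<le> b n + b m" if "n \<ge> 1" "m \<ge> 1" for n m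
  proof -
    have "ln (s (n + m)) \<le> ln (A * s n * s m)"
      using up[OF that] pos that A by (subst ln_le_cancel_iff) (auto intro!: mult_pos_pos pos)
    also have "\<dots> = ln A + ln (s n) + ln (s m)" using A pos[OF that(1)] pos[OF that(2)] by (simp add: ln_mult)
    finally show ?thesis unfolding b_def by simp
  qed
  have csup: "c n + c m \<le> c (n + m)" if "n \<ge> 1" "m \<ge> 1" for n m
  proof -
    have "ln (B * s n * s m) \<le> ln (s (n + m))"
      using lo[OF that] pos that B by (subst ln_le_cancel_iff) (auto intro!: mult_pos_pos pos)
    moreover have "ln (B * s n * s m) = ln B + ln (s n) + ln (s m)" using B pos[OF that(1)] pos[OF that(2)] by (simp add: ln_mult)
    ultimately show ?thesis unfolding c_def by simp
  qed
  have BA: "B \<le> A"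
  proof -
    have "B * s 1 * s 1 \<le> A * s 1 * s 1" using lo[of 1 1] up[of 1 1] by simp
    thus ?thesis using pos[of 1] by simp
  qed
  have cb: "c n \<le> b n" for n using BA B unfolding b_def c_def by simp
  have bk: "b (k * n) \<le> real k * b n" if "n \<ge> 1" "k \<ge> 1" for k n
    using that(2)
  proof (induction k rule: dec_induct)
    case base then show ?case by simp
  next
    case (step k)
    have "b (Suc k * n) = b (k * n + n)" by (simp add: add.commute)
    also have "\<dots> \<le> b (k * n) + b n" using bsub step that by (simp add: Suc_le_eq)
    also have "\<dots> \<le> real (Suc k) * b n" using step by (simp add: algebra_simps)
    finally show ?case .
  qed
  have ck: "real k * c n \<le> c (k * n)" if "n \<ge> 1" "k \<ge> 1" for k n
    using that(2)
  proof (induction k rule: dec_induct)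
    case base then show ?case by simp
  next
    case (step k)
    have "real (Suc k) * c n \<le> c (k * n) + c n" using step by (simp add: algebra_simps)
    also have "\<dots> \<le> c (k * n + n)" using csup step that by (simp add: Suc_le_eq)
    also have "k * n + n = Suc k * n" by simp
    finally show ?case .
  qed
  have key: "c n / real n \<le> b m / real m" if "n \<ge> 1" "m \<ge> 1" for n m
  proof -
    have "real m * c n \<le> c (m * n)" using ck that by simp
    also have "\<dots> \<le> b (n * m)" using cb by (simp add: mult.commute)
    also have "\<dots> \<le> real n * b m" using bk that by simp
    finally have "real m * c n \<le> real n * b m" .
    thus ?thesis using that by (simp add: divide_simps mult.commute)
  qed
  define Q where "Q = (SUP n\<in>{1..}. c n / real n)"
  have bdd: "bdd_above ((\<lambda>n. c n / real n) ` {1..})"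
    using key[of _ 1] by (auto intro!: bdd_aboveI2)
  have "c n / real n \<le> Q" if "n \<ge> 1" for n unfolding Q_def
    by (rule cSUP_upper[OF _ bdd]) (use that in auto)
  moreover have "Q \<le> b m / real m" if "m \<ge> 1" for m unfolding Q_def
    by (rule cSUP_least) (use that key in auto)
  ultimately have "c n \<le> real n * Q \<and> real n * Q \<le> b n" if "n \<ge> 1" for n
    using that by (auto simp: divide_simps mult.commute)
  thus ?thesis unfolding b_def c_def by blast
qed




locale setting =
  fixes k l :: nat and X Y :: "(nat \<Rightarrow> nat) set" and \<pi> :: "(nat \<Rightarrow> nat) \<Rightarrow> (nat \<Rightarrow> nat)"
    and f :: "nat \<Rightarrow> (nat \<Rightarrow> nat) \<Rightarrow> real" and \<phi> :: "nat \<Rightarrow> nat" and C M :: real and p :: nat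
  assumes X_ne: "X \<noteq> {}" and X_sub: "X \<subseteq> {x. \<forall>i. x i \<in> {1..k}}" and X_shift: "shift ` X \<subseteq> X"
    and Y_sub: "Y \<subseteq> {x. \<forall>i. x i \<in> {1..l}}"
    and piX: "\<pi> ` X = Y" and phi: "\<forall>x\<in>X. \<pi> x = \<phi> \<circ> x"
    and p_pos: "p > 0"
    and spec: "\<forall>u\<in>language X. \<forall>v\<in>language X. u \<noteq> [] \<longrightarrow> v \<noteq> [] \<longrightarrow> (\<exists>w. length w = p \<and> u @ w @ v \<in> language X)"
    and fpos: "\<And>n x. n \<ge> 1 \<Longrightarrow> x \<in> X \<Longrightarrow> f n x > 0"
    and C_pos: "C > 0"
    and aa_lo: "\<And>n m x. n \<ge> 1 \<Longrightarrow> m \<ge> 1 \<Longrightarrow> x \<in> X \<Longrightarrow> exp (-C) * f n x * f m ((shift ^^ n) x) \<le> f (n + m) x"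
    and aa_up: "\<And>n m x. n \<ge> 1 \<Longrightarrow> m \<ge> 1 \<Longrightarrow> x \<in> X \<Longrightarrow> f (n + m) x \<le> exp C * f n x * f m ((shift ^^ n) x)"
    and bv: "\<And>n x x'. n \<ge> 1 \<Longrightarrow> x \<in> X \<Longrightarrow> x' \<in> X \<Longrightarrow> (\<forall>i<n. x i = x' i) \<Longrightarrow> f n x \<le> M * f n x'"
begin

lemma M_ge1: "M \<ge> 1"
proof -
  obtain x where x: "x \<in> X" using X_ne by auto
  have "f 1 x \<le> M * f 1 x" using bv[of 1 x x] x by simp
  thus ?thesis using fpos[of 1 x] x by simp
qed

lemma shift_pow_in: "x \<in> X \<Longrightarrow> (shift ^^ n) x \<in> X"
  by (induction n) (use X_shift in auto)

lemma word_in_Bn: "x \<in> X \<Longrightarrow> word n x \<in> Bn n X"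
  by (auto simp: Bn_def)

lemma finBX: "finite (Bn n X)" by (rule Bn_finite[OF X_sub])
lemma finBY: "finite (Bn n Y)" by (rule Bn_finite[OF Y_sub])

definition rep :: "nat list \<Rightarrow> (nat \<Rightarrow> nat)" where "rep u = (SOME x. x \<in> X \<and> x \<in> cyl u)"
definition R :: "nat list \<Rightarrow> real" where "R u = f (length u) (rep u)"
definition Z :: "nat \<Rightarrow> real" where "Z n = (\<Sum>u\<in>Bn n X. R u)"

lemma rep_in: assumes "u \<in> Bn n X" shows "rep u \<in> X" "rep u \<in> cyl u" "word n (rep u) = u"
proof -
  obtain x where "x \<in> X" "u = word n x" using assms by (auto simp: Bn_def)
  hence "\<exists>x. x \<in> X \<and> x \<in> cyl u" using word_cyl by blast
  hence "rep u \<in> X \<and> rep u \<in> cyl u" unfolding rep_def by (rule someI_ex)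
  thus "rep u \<in> X" "rep u \<in> cyl u" by auto
  thus "word n (rep u) = u" using cyl_word[of u n] Bn_length[OF assms] by simp
qed

lemma R_pos: "u \<in> Bn n X \<Longrightarrow> n \<ge> 1 \<Longrightarrow> R u > 0"
  using rep_in fpos Bn_length unfolding R_def by metis

lemma R_bv: assumes "u \<in> Bn n X" "n \<ge> 1" "x \<in> X" "x \<in> cyl u"
  shows "f n x \<le> M * R u" "R u \<le> M * f n x"
proof -
  have "u = word n x" using cyl_word[OF Bn_length[OF assms(1)] assms(4)] .
  hence ag: "\<forall>i<n. x i = rep u i" using rep_in[OF assms(1)] by (simp add: word_eq_iff)
  show "f n x \<le> M * R u" using bv[OF assms(2,3) rep_in(1)[OF assms(1)] ag] Bn_length[OF assms(1)]
    by (simp add: R_def)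
  show "R u \<le> M * f n x" using bv[OF assms(2) rep_in(1)[OF assms(1)] assms(3)] ag Bn_length[OF assms(1)]
    by (simp add: R_def)
qed

lemma Bn_ne: "Bn n X \<noteq> {}" using X_ne word_in_Bn by blast

lemma Z_pos: "n \<ge> 1 \<Longrightarrow> Z n > 0"
  unfolding Z_def using finBX Bn_ne R_pos by (intro sum_pos) auto

lemma R_nonneg: "u \<in> Bn n X \<Longrightarrow> n \<ge> 1 \<Longrightarrow> R u \<ge> 0" using R_pos by fastforce

lemma Z_up: assumes n: "n \<ge> 1" and m: "m \<ge> 1"
  shows "Z (n + m) \<le> exp C * M^2 * Z n * Z m"
proof -
  define g where "g u = (take n u, drop n u)" for u :: "nat list"
  have each: "R u \<le> exp C * M^2 * (R (take n u) * R (drop n u))" if u: "u \<in> Bn (n + m) X" for u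
  proof -
    define x where "x = rep u"
    have x: "x \<in> X" "word (n + m) x = u" using rep_in[OF u] by (auto simp: x_def)
    have t: "take n u = word n x" using x take_word[of n "n+m" x] by simp
    have d: "drop n u = word m ((shift ^^ n) x)" using x drop_word by metis
    have "R u = f (n + m) x" unfolding R_def x_def using Bn_length[OF u] by simp
    also have "\<dots> \<le> exp C * f n x * f m ((shift ^^ n) x)" using aa_up[OF n m x(1)] .
    also have "\<dots> \<le> exp C * (M * R (take n u)) * (M * R (drop n u))"
    proof -
      have 1: "f n x \<le> M * R (take n u)"
        using R_bv(1)[OF word_in_Bn[OF x(1)] n x(1) word_cyl] t by simp
      have 2: "f m ((shift ^^ n) x) \<le> M * R (drop n u)"
        using R_bv(1)[OF word_in_Bn[OF shift_pow_in[OF x(1)]] m shift_pow_in[OF x(1)] word_cyl] d by simp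
      have 3: "0 < f m ((shift ^^ n) x)" using fpos[OF m] shift_pow_in[OF x(1)] by blast
      show ?thesis using 1 2 fpos[OF n x(1)] 3
        by (intro mult_mono) (auto intro!: mult_nonneg_nonneg)
    qed
    finally show ?thesis by (simp add: power2_eq_square algebra_simps)
  qed
  have inj: "inj_on g (Bn (n + m) X)" unfolding g_def
    by (rule inj_onI) (metis append_take_drop_id prod.inject)
  have sub: "g ` Bn (n + m) X \<subseteq> Bn n X \<times> Bn m X"
  proof
    fix q assume "q \<in> g ` Bn (n + m) X"
    then obtain u where u: "u \<in> Bn (n + m) X" and q: "q = g u" by auto
    obtain x where x: "x \<in> X" "u = word (n + m) x" using u by (auto simp: Bn_def)
    show "q \<in> Bn n X \<times> Bn m X" using q x take_word[of n "n+m" x] drop_word[of n m x]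
      by (auto simp: g_def intro!: word_in_Bn shift_pow_in)
  qed
  have "(\<Sum>u\<in>Bn (n + m) X. (\<lambda>(v, w). R v * R w) (g u)) = (\<Sum>q\<in>g ` Bn (n + m) X. (\<lambda>(v, w). R v * R w) q)"
    by (rule sum.reindex_cong[OF inj refl refl, symmetric])
  also have "\<dots> \<le> (\<Sum>q\<in>Bn n X \<times> Bn m X. (\<lambda>(v, w). R v * R w) q)"
    using sub finBX n m by (intro sum_mono2) (auto intro!: mult_nonneg_nonneg R_nonneg)
  also have "\<dots> = Z n * Z m" unfolding Z_def
    by (simp add: sum_product sum.cartesian_product)
  finally have S1: "(\<Sum>u\<in>Bn (n + m) X. (\<lambda>(v, w). R v * R w) (g u)) \<le> Z n * Z m" .
  have "Z (n + m) \<le> (\<Sum>u\<in>Bn (n + m) X. exp C * M^2 * (R (take n u) * R (drop n u)))"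
    unfolding Z_def by (rule sum_mono) (rule each)
  also have "\<dots> = exp C * M^2 * (\<Sum>u\<in>Bn (n + m) X. (\<lambda>(v, w). R v * R w) (g u))"
    by (simp add: sum_distrib_left g_def)
  also have "\<dots> \<le> exp C * M^2 * (Z n * Z m)"
    by (rule mult_left_mono[OF S1]) simp
  finally show ?thesis by (simp add: algebra_simps)
qed

end


context setting begin

lemma f_lower: assumes "q \<ge> 1" shows "\<exists>c>0. \<forall>x\<in>X. c \<le> f q x"
proof -
  define c where "c = Min (R ` Bn q X) / M"
  have fin: "finite (R ` Bn q X)" using finBX by simp
  have ne: "R ` Bn q X \<noteq> {}" using Bn_ne by simp
  have "Min (R ` Bn q X) \<in> R ` Bn q X" using Min_in[OF fin ne] .
  hence "Min (R ` Bn q X) > 0" using R_pos assms by auto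
  hence cpos: "c > 0" using M_ge1 by (simp add: c_def)
  have "c \<le> f q x" if x: "x \<in> X" for x
  proof -
    have "Min (R ` Bn q X) \<le> R (word q x)" using fin word_in_Bn[OF x] by simp
    also have "\<dots> \<le> M * f q x" using R_bv(2)[OF word_in_Bn[OF x] assms x word_cyl] .
    finally show ?thesis using M_ge1 by (simp add: c_def divide_simps mult.commute)
  qed
  thus ?thesis using cpos by blast
qed

lemma lang_Bn: "u \<in> language X \<Longrightarrow> u \<in> Bn (length u) X"
  by (auto simp: language_def Bn_def)

lemma Z_lo3:
  shows "\<exists>K>0. \<forall>n\<ge>1. \<forall>m\<ge>1. K * Z n * Z m \<le> Z (n + p + m)"
proof -
  obtain cp where cp: "cp > 0" "\<And>x. x \<in> X \<Longrightarrow> cp \<le> f p x" using f_lower[of p] p_pos by auto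
  define K where "K = exp (- C) * exp (- C) * cp / M^2"
  have Kpos: "K > 0" using cp M_ge1 by (simp add: K_def)
  have "K * Z n * Z m \<le> Z (n + p + m)" if n: "n \<ge> 1" and m: "m \<ge> 1" for n m
  proof -
    define gap where "gap v w = (SOME g. length g = p \<and> v @ g @ w \<in> language X)" for v w :: "nat list"
    define J where "J = (\<lambda>(v, w). v @ gap v w @ w)"
    have gapP: "length (gap v w) = p \<and> v @ gap v w @ w \<in> language X"
      if "v \<in> Bn n X" "w \<in> Bn m X" for v w
    proof -
      have "v \<in> language X" "w \<in> language X" using that by (auto simp: language_def)
      moreover have "v \<noteq> []" "w \<noteq> []" using that n m Bn_length by fastforce+
      ultimately have "\<exists>g. length g = p \<and> v @ g @ w \<in> language X" using spec by blast
      thus ?thesis unfolding gap_def by (rule someI_ex)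
    qed
    have JB: "J q \<in> Bn (n + p + m) X" if qin: "q \<in> Bn n X \<times> Bn m X" for q
    proof -
      obtain v w where q: "q = (v, w)" "v \<in> Bn n X" "w \<in> Bn m X" using qin by (cases q) auto
      have "J q \<in> language X" using gapP[OF q(2,3)] q(1) by (simp add: J_def)
      hence "J q \<in> Bn (length (J q)) X" by (rule lang_Bn)
      moreover have "length (J q) = n + p + m" using gapP[OF q(2,3)] q Bn_length by (auto simp: J_def)
      ultimately show ?thesis by simp
    qed
    have inj: "inj_on J (Bn n X \<times> Bn m X)"
    proof (rule inj_onI)
      fix q q' assume q: "q \<in> Bn n X \<times> Bn m X" and q': "q' \<in> Bn n X \<times> Bn m X" and e: "J q = J q'"
      obtain v w where qq: "q = (v, w)" "v \<in> Bn n X" "w \<in> Bn m X" using q by (cases q) auto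
      obtain v' w' where qq': "q' = (v', w')" "v' \<in> Bn n X" "w' \<in> Bn m X" using q' by (cases q') auto
      have lv: "length v = n" "length v' = n" "length w = m" "length w' = m"
        using qq qq' Bn_length by auto
      have "take n (J q) = v" "take n (J q') = v'" using lv qq qq' by (auto simp: J_def)
      moreover have "drop (n + p) (J q) = w" "drop (n + p) (J q') = w'"
        using lv qq qq' gapP[OF qq(2,3)] gapP[OF qq'(2,3)] by (auto simp: J_def)
      ultimately show "q = q'" using e qq qq' by auto
    qed
    have each: "K * (R v * R w) \<le> R (J (v, w))" if v: "v \<in> Bn n X" and w: "w \<in> Bn m X" for v w
    proof -
      define u where "u = J (v, w)"
      have u: "u \<in> Bn (n + p + m) X" using JB v w by (simp add: u_def)
      define x where "x = rep u"
      have x: "x \<in> X" "word (n + p + m) x = u" using rep_in[OF u] by (auto simp: x_def)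
      have lu: "length v = n" "length w = m" using v w Bn_length by auto
      have gp: "length (gap v w) = p" using gapP[OF v w] by simp
      have xv: "x \<in> cyl v"
      proof -
        have "take n u = v" using lu by (simp add: u_def J_def)
        hence "word n x = v" using take_word[of n "n+p+m" x] x by simp
        thus ?thesis using word_cyl by metis
      qed
      have xw: "(shift ^^ (p + n)) x \<in> cyl w"
      proof -
        have "drop (n + p) u = w" using lu gp by (simp add: u_def J_def)
        hence "word m ((shift ^^ (n + p)) x) = w" using drop_word[of "n+p" m x] x by simp
        thus ?thesis using word_cyl by (metis add.commute)
      qed
      have sx: "(shift ^^ n) x \<in> X" "(shift ^^ (p + n)) x \<in> X" using shift_pow_in x by auto
      have Ru: "R u = f (n + (p + m)) x" unfolding R_def x_def using Bn_length[OF u] by (simp add: add.assoc)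
      have pm: "p + m \<ge> 1" using m by simp
      have p1: "p \<ge> 1" using p_pos by simp
      have a1: "exp (-C) * f n x * f (p + m) ((shift ^^ n) x) \<le> f (n + (p + m)) x"
        using aa_lo[OF n pm x(1)] .
      have a2: "exp (-C) * f p ((shift ^^ n) x) * f m ((shift ^^ (p + n)) x) \<le> f (p + m) ((shift ^^ n) x)"
        using aa_lo[OF p1 m sx(1)] by (simp add: funpow_add)
      have b1: "R v \<le> M * f n x" using R_bv(2)[OF v n x(1) xv] .
      have b2: "R w \<le> M * f m ((shift ^^ (p + n)) x)" using R_bv(2)[OF w m sx(2) xw] .
      have b3: "cp \<le> f p ((shift ^^ n) x)" using cp(2)[OF sx(1)] .
      define A where "A = f n x" define B where "B = f p ((shift ^^ n) x)"
      define D where "D = f m ((shift ^^ (p + n)) x)"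
      have pos: "A > 0" "B > 0" "D > 0" using fpos n m p1 x sx by (auto simp: A_def B_def D_def)
      have "K * (R v * R w) = exp (-C) * exp (-C) * cp * ((R v / M) * (R w / M))"
        by (simp add: K_def power2_eq_square)
      also have "\<dots> \<le> exp (-C) * exp (-C) * B * (A * D)"
      proof -
        have "R v / M \<le> A" using b1 M_ge1 by (simp add: A_def divide_simps mult.commute)
        moreover have "R w / M \<le> D" using b2 M_ge1 by (simp add: D_def divide_simps mult.commute)
        moreover have "R v / M \<ge> 0" "R w / M \<ge> 0" using R_pos v w n m M_ge1 by (auto intro!: less_imp_le)
        ultimately have P: "(R v / M) * (R w / M) \<le> A * D" by (intro mult_mono) (use pos in auto)
        have P0: "0 \<le> (R v / M) * (R w / M)" using \<open>R v / M \<ge> 0\<close> \<open>R w / M \<ge> 0\<close> by (rule mult_nonneg_nonneg)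
        have "cp \<le> B" using b3 by (simp add: B_def)
        hence Q: "exp (-C) * exp (-C) * cp \<le> exp (-C) * exp (-C) * B" by (intro mult_left_mono) auto
        show ?thesis using mult_mono[OF Q P] P0 pos by simp
      qed
      also have "\<dots> = exp (-C) * A * (exp (-C) * B * D)" by (simp add: algebra_simps)
      also have "\<dots> \<le> exp (-C) * A * f (p + m) ((shift ^^ n) x)"
        using a2 pos by (intro mult_left_mono) (auto simp: B_def D_def)
      also have "\<dots> \<le> R u" using a1 Ru by (simp add: A_def)
      finally show ?thesis by (simp add: u_def)
    qed
    have "K * Z n * Z m = K * (\<Sum>q\<in>Bn n X \<times> Bn m X. (\<lambda>(v, w). R v * R w) q)"
      unfolding Z_def by (simp add: sum_product sum.cartesian_product mult.assoc)
    also have "\<dots> = (\<Sum>q\<in>Bn n X \<times> Bn m X. K * (\<lambda>(v, w). R v * R w) q)"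
      by (rule sum_distrib_left)
    also have "\<dots> \<le> (\<Sum>q\<in>Bn n X \<times> Bn m X. R (J q))"
      by (rule sum_mono) (use each in auto)
    also have "\<dots> = (\<Sum>u\<in>J ` (Bn n X \<times> Bn m X). R u)"
      by (rule sum.reindex_cong[OF inj refl refl, symmetric])
    also have "\<dots> \<le> Z (n + p + m)" unfolding Z_def
      using JB finBX R_nonneg n by (intro sum_mono2) auto
    finally show ?thesis .
  qed
  thus ?thesis using Kpos by blast
qed

end


context setting begin

lemma Z_lo: "\<exists>K>0. \<forall>n\<ge>1. \<forall>m\<ge>1. K * Z n * Z m \<le> Z (n + m)"
proof -
  obtain K0 where K0: "K0 > 0" "\<And>n m. n \<ge> 1 \<Longrightarrow> m \<ge> 1 \<Longrightarrow> K0 * Z n * Z m \<le> Z (n + p + m)"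
    using Z_lo3 by blast
  define D where "D = exp C * M^2 * Z p"
  have p1: "p \<ge> 1" using p_pos by simp
  have Dpos: "D > 0" using Z_pos[OF p1] M_ge1 by (simp add: D_def)
  have "K0 / D * Z n * Z m \<le> Z (n + m)" if n: "n \<ge> 1" and m: "m \<ge> 1" for n m
  proof -
    have "K0 * Z n * Z m \<le> Z (n + m + p)" using K0(2)[OF n m] by (simp add: add_ac)
    also have "\<dots> \<le> exp C * M^2 * Z (n + m) * Z p" using Z_up[of "n+m" p] n p1 by simp
    also have "\<dots> = D * Z (n + m)" by (simp add: D_def)
    finally show ?thesis using Dpos by (simp add: divide_simps mult.commute)
  qed
  thus ?thesis using K0 Dpos by (intro exI[of _ "K0 / D"]) auto
qed

lemma word_comp: "word n (\<phi> \<circ> x) = map \<phi> (word n x)"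
  by (simp add: word_def)

lemma cyl_word_eq: "z \<in> cyl (word n y) \<longleftrightarrow> word n z = word n y"
  by (simp add: in_cyl_iff word_eq_iff)

lemma U_char: assumes u: "u \<in> Bn n X"
  shows "\<pi> ` (X \<inter> cyl u) \<subseteq> cyl (word n y) \<longleftrightarrow> map \<phi> u = word n y"
proof -
  have lu: "length u = n" using Bn_length[OF u] .
  have key: "\<pi> x \<in> cyl (word n y) \<longleftrightarrow> map \<phi> u = word n y" if "x \<in> X" "x \<in> cyl u" for x
  proof -
    have "u = word n x" using cyl_word[OF lu that(2)] .
    thus ?thesis using phi that(1) by (simp add: cyl_word_eq word_comp)
  qed
  show ?thesis using key rep_in[OF u] by blast
qed

definition U :: "nat \<Rightarrow> (nat \<Rightarrow> nat) \<Rightarrow> nat list set" where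
  "U n y = {u \<in> Bn n X. map \<phi> u = word n y}"

lemma En_eq: "{w \<in> Bn n X. \<pi> ` (X \<inter> cyl w) \<subseteq> cyl (word n y)} = U n y"
  using U_char unfolding U_def by blast

lemma finU: "finite (U n y)" using finBX by (simp add: U_def)

lemma sum_E_le: assumes n: "n \<ge> 1" and E: "E \<in> En_sets X \<pi> n y"
  shows "finite E" "(\<Sum>x\<in>E. f n x) \<le> M * (\<Sum>u\<in>U n y. R u)"
proof -
  have E1': "E \<subseteq> (\<Union>w\<in>{w \<in> Bn n X. \<pi> ` (X \<inter> cyl w) \<subseteq> cyl (word n y)}. X \<inter> cyl w)"
    and E2': "\<forall>w \<in> Bn n X. \<pi> ` (X \<inter> cyl w) \<subseteq> cyl (word n y) \<longrightarrow> card (E \<inter> cyl w) = 1"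
    using E unfolding En_sets_def by auto
  have E1: "E \<subseteq> (\<Union>u\<in>U n y. X \<inter> cyl u)" using E1' unfolding En_eq .
  have E2: "\<And>u. u \<in> U n y \<Longrightarrow> card (E \<inter> cyl u) = 1"
    using E2' U_char by (auto simp: U_def)
  have wE: "x \<in> X \<and> word n x \<in> U n y" if xE: "x \<in> E" for x
  proof -
    obtain u where u: "u \<in> U n y" "x \<in> X" "x \<in> cyl u" using E1 xE by blast
    have "u = word n x" using cyl_word[OF Bn_length u(3)] u(1) by (auto simp: U_def)
    thus ?thesis using u by simp
  qed
  have fib: "{x \<in> E. word n x = u} = E \<inter> cyl u" if "u \<in> U n y" for u
  proof -
    have lu: "length u = n" using that Bn_length by (auto simp: U_def)
    show ?thesis using cyl_word[OF lu] word_cyl by blast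
  qed
  have "E \<subseteq> (\<Union>u\<in>U n y. E \<inter> cyl u)" using wE word_cyl by blast
  moreover have "finite (\<Union>u\<in>U n y. E \<inter> cyl u)"
    using finU E2 by (intro finite_UN_I) (auto intro: card_ge_0_finite)
  ultimately show finE: "finite E" by (rule finite_subset)
  have "(\<Sum>x\<in>E. f n x) = (\<Sum>u\<in>U n y. \<Sum>x\<in>{x \<in> E. word n x = u}. f n x)"
    using finE finU wE by (intro sum.group[symmetric]) auto
  also have "\<dots> \<le> (\<Sum>u\<in>U n y. M * R u)"
  proof (rule sum_mono)
    fix u assume u: "u \<in> U n y"
    obtain x0 where x0: "E \<inter> cyl u = {x0}" using E2[OF u] card_1_singletonE by blast
    have "x0 \<in> X" using wE x0 by blast
    moreover have "x0 \<in> cyl u" using x0 by blast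
    ultimately have "f n x0 \<le> M * R u" using R_bv(1)[of u n x0] u n by (auto simp: U_def)
    thus "(\<Sum>x\<in>{x \<in> E. word n x = u}. f n x) \<le> M * R u" using fib[OF u] x0 by simp
  qed
  also have "\<dots> = M * (\<Sum>u\<in>U n y. R u)" by (simp add: sum_distrib_left)
  finally show "(\<Sum>x\<in>E. f n x) \<le> M * (\<Sum>u\<in>U n y. R u)" .
qed

lemma E0_in: assumes n: "n \<ge> 1"
  shows "rep ` U n y \<in> En_sets X \<pi> n y" "(\<Sum>x\<in>rep ` U n y. f n x) = (\<Sum>u\<in>U n y. R u)"
proof -
  have UB: "\<And>u. u \<in> U n y \<Longrightarrow> u \<in> Bn n X" by (simp add: U_def)
  have inj: "inj_on rep (U n y)"
    by (rule inj_onI) (metis UB rep_in(3))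
  have int: "rep ` U n y \<inter> cyl u = {rep u}" if u: "u \<in> U n y" for u
  proof -
    have "u' = u" if "u' \<in> U n y" "rep u' \<in> cyl u" for u'
      using cyl_word[OF Bn_length[OF UB[OF u]] that(2)] rep_in(3)[OF UB[OF that(1)]] by simp
    thus ?thesis using rep_in(2)[OF UB[OF u]] u by blast
  qed
  have s1: "rep ` U n y \<subseteq> (\<Union>w\<in>{w \<in> Bn n X. \<pi> ` (X \<inter> cyl w) \<subseteq> cyl (word n y)}. X \<inter> cyl w)"
    unfolding En_eq using rep_in(1,2)[OF UB] by blast
  have s2: "\<forall>w \<in> Bn n X. \<pi> ` (X \<inter> cyl w) \<subseteq> cyl (word n y) \<longrightarrow> card (rep ` U n y \<inter> cyl w) = 1"
  proof (intro ballI impI)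
    fix w assume "w \<in> Bn n X" "\<pi> ` (X \<inter> cyl w) \<subseteq> cyl (word n y)"
    hence "w \<in> U n y" using U_char by (simp add: U_def)
    thus "card (rep ` U n y \<inter> cyl w) = 1" using int by simp
  qed
  show "rep ` U n y \<in> En_sets X \<pi> n y" unfolding En_sets_def using s1 s2 by blast
  show "(\<Sum>x\<in>rep ` U n y. f n x) = (\<Sum>u\<in>U n y. R u)"
    by (subst sum.reindex[OF inj]) (auto simp: R_def Bn_length[OF UB] intro!: sum.cong)
qed

lemma gfun_bounds: assumes n: "n \<ge> 1"
  shows "(\<Sum>u\<in>U n y. R u) \<le> gfun X \<pi> f n y" "gfun X \<pi> f n y \<le> M * (\<Sum>u\<in>U n y. R u)"
proof -
  have bdd: "bdd_above ((\<lambda>E. \<Sum>x\<in>E. f n x) ` En_sets X \<pi> n y)"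
    using sum_E_le(2)[OF n] by (auto intro!: bdd_aboveI2)
  show "(\<Sum>u\<in>U n y. R u) \<le> gfun X \<pi> f n y" unfolding gfun_def
    using cSUP_upper[OF E0_in(1)[OF n] bdd] E0_in(2)[OF n] by simp
  show "gfun X \<pi> f n y \<le> M * (\<Sum>u\<in>U n y. R u)" unfolding gfun_def
    using E0_in(1)[OF n] sum_E_le(2)[OF n] by (intro cSUP_least) auto
qed

definition G :: "nat \<Rightarrow> (nat \<Rightarrow> nat) \<Rightarrow> real" where
  "G n y = exp (- real n * pressure X f) * (\<Sum>u\<in>U n y. R u)"

lemma G_nonneg: "n \<ge> 1 \<Longrightarrow> G n y \<ge> 0"
  unfolding G_def using R_nonneg by (auto simp: U_def intro!: sum_nonneg mult_nonneg_nonneg)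

lemma gt_bounds: assumes n: "n \<ge> 1"
  shows "G n y \<le> gtilde X \<pi> f n y" "gtilde X \<pi> f n y \<le> M * G n y"
  using gfun_bounds[OF n, of y] unfolding gtilde_def G_def
  by (auto simp: mult.commute mult.left_commute)

lemma U_word: "word n y = word n y' \<Longrightarrow> U n y = U n y'"
  by (simp add: U_def)

definition yw :: "nat list \<Rightarrow> (nat \<Rightarrow> nat)" where "yw w = (SOME y. y \<in> Y \<and> y \<in> cyl w)"

lemma yw_in: assumes w: "w \<in> Bn n Y" shows "yw w \<in> Y" "word n (yw w) = w"
proof -
  obtain y where "y \<in> Y" "w = word n y" using w by (auto simp: Bn_def)
  hence "\<exists>y. y \<in> Y \<and> y \<in> cyl w" using word_cyl by blast
  hence "yw w \<in> Y \<and> yw w \<in> cyl w" unfolding yw_def by (rule someI_ex)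
  thus "yw w \<in> Y" "word n (yw w) = w" using cyl_word[OF Bn_length[OF w]] by auto
qed

definition Sp :: "nat \<Rightarrow> real" where "Sp n = exp (- real n * pressure X f) * Z n"

lemma Sp_sum: "(\<Sum>w\<in>Bn n Y. G n (yw w)) = Sp n"
proof -
  have "(\<Sum>w\<in>Bn n Y. \<Sum>u\<in>U n (yw w). R u) = (\<Sum>w\<in>Bn n Y. \<Sum>u\<in>{u \<in> Bn n X. map \<phi> u = w}. R u)"
    by (intro sum.cong refl) (simp add: U_def yw_in)
  also have "\<dots> = Z n" unfolding Z_def
  proof (rule sum.group[OF finBX finBY])
    show "map \<phi> ` Bn n X \<subseteq> Bn n Y"
    proof
      fix w assume "w \<in> map \<phi> ` Bn n X"
      then obtain x where x: "x \<in> X" "w = map \<phi> (word n x)" by (auto simp: Bn_def)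
      hence "w = word n (\<pi> x)" using phi by (simp add: word_comp)
      moreover have "\<pi> x \<in> Y" using piX x by blast
      ultimately show "w \<in> Bn n Y" by (auto simp: Bn_def)
    qed
  qed
  finally show ?thesis unfolding G_def Sp_def by (simp add: sum_distrib_left[symmetric])
qed

lemma S_bounds: assumes n: "n \<ge> 1"
  shows "Sp n \<le> S_sum X Y \<pi> f n" "S_sum X Y \<pi> f n \<le> M * Sp n"
proof -
  have eq: "S_sum X Y \<pi> f n = (\<Sum>w\<in>Bn n Y. gtilde X \<pi> f n (yw w))"
    unfolding S_sum_def coef_a_def yw_def by (intro sum.cong refl) (simp add: Bn_length)
  show "Sp n \<le> S_sum X Y \<pi> f n" unfolding eq Sp_sum[symmetric]
    by (intro sum_mono gt_bounds[OF n])
  show "S_sum X Y \<pi> f n \<le> M * Sp n" unfolding eq Sp_sum[symmetric] sum_distrib_left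
    by (intro sum_mono gt_bounds[OF n])
qed

lemma Sp_pos: "n \<ge> 1 \<Longrightarrow> Sp n > 0" using Z_pos by (simp add: Sp_def)

lemma Sp_quasi: "\<exists>A B. A > 0 \<and> B > 0 \<and> (\<forall>n\<ge>1. \<forall>m\<ge>1. Sp (n + m) \<le> A * Sp n * Sp m \<and> B * Sp n * Sp m \<le> Sp (n + m))"
proof -
  obtain K where K: "K > 0" "\<And>n m. n \<ge> 1 \<Longrightarrow> m \<ge> 1 \<Longrightarrow> K * Z n * Z m \<le> Z (n + m)" using Z_lo by blast
  define P where "P = pressure X f"
  have e: "exp ((- real n - real m) * pressure X f) = exp (- (real n * pressure X f)) * exp (- (real m * pressure X f))" for n m
  proof -
    have "(- real n - real m) * pressure X f = (- (real n * pressure X f)) + (- (real m * pressure X f))" by (simp add: algebra_simps)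
    thus ?thesis by (simp only: exp_add)
  qed
  have "Sp (n + m) \<le> (exp C * M^2) * Sp n * Sp m \<and> K * Sp n * Sp m \<le> Sp (n + m)" if "n \<ge> 1" "m \<ge> 1" for n m
  proof
    have "Sp (n + m) = exp (- real n * P) * exp (- real m * P) * Z (n + m)" by (simp add: Sp_def e P_def)
    also have "\<dots> \<le> exp (- real n * P) * exp (- real m * P) * (exp C * M^2 * Z n * Z m)"
      by (intro mult_left_mono Z_up that) simp
    also have "\<dots> = (exp C * M^2) * Sp n * Sp m" by (simp add: Sp_def P_def)
    finally show "Sp (n + m) \<le> (exp C * M^2) * Sp n * Sp m" .
    have "K * Sp n * Sp m = exp (- real n * P) * exp (- real m * P) * (K * Z n * Z m)" by (simp add: Sp_def P_def)
    also have "\<dots> \<le> exp (- real n * P) * exp (- real m * P) * Z (n + m)"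
      by (intro mult_left_mono K that) simp
    also have "\<dots> = Sp (n + m)" by (simp add: Sp_def e P_def)
    finally show "K * Sp n * Sp m \<le> Sp (n + m)" .
  qed
  moreover have "exp C * M^2 > 0" using M_ge1 by simp
  ultimately show ?thesis using K(1) by blast
qed

end


context setting begin

lemma l_pos: "l \<ge> 1"
proof -
  obtain x where "x \<in> X" using X_ne by auto
  hence "\<pi> x \<in> Y" using piX by blast
  thus ?thesis using Y_sub by fastforce
qed

lemma seqdist_gt: assumes "seqdist a b > \<epsilon>" "\<epsilon> > 0" "(1/2::real) ^ m \<le> \<epsilon>"
  shows "\<exists>j<m. a j \<noteq> b j"
proof -
  have ab: "a \<noteq> b" using assms by (auto simp: seqdist_def)
  then obtain i where "a i \<noteq> b i" by auto
  define j where "j = (LEAST i. a i \<noteq> b i)"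
  have aj: "a j \<noteq> b j" unfolding j_def by (rule LeastI) fact
  have "(1/2::real) ^ j > \<epsilon>" using assms(1) ab by (simp add: seqdist_def j_def)
  hence "j < m"
  proof (rule contrapos_pp)
    assume "\<not> j < m"
    hence "(1/2::real) ^ j \<le> (1/2) ^ m" by (intro power_decreasing) auto
    thus "\<not> \<epsilon> < (1/2) ^ j" using assms(3) by linarith
  qed
  thus ?thesis using aj by blast
qed

lemma fiber_card: assumes n: "n \<ge> 1" and E: "separated Y n \<epsilon> E" and \<epsilon>: "\<epsilon> > 0" and m: "(1/2::real) ^ m \<le> \<epsilon>"
  shows "card {y \<in> E. word n y = w} \<le> l ^ m"
proof -
  define Fb where "Fb = {y \<in> E. word n y = w}"
  define h where "h y = map y [n..<n+m]" for y :: "nat \<Rightarrow> nat"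
  have EY: "E \<subseteq> Y" and sepE: "\<forall>x\<in>E. \<forall>y\<in>E. x \<noteq> y \<longrightarrow> (\<exists>i<n. seqdist ((shift ^^ i) x) ((shift ^^ i) y) > \<epsilon>)"
    using E by (auto simp: separated_def)
  have inj: "inj_on h Fb"
  proof (rule inj_onI, rule ccontr)
    fix y y' assume y: "y \<in> Fb" and y': "y' \<in> Fb" and hh: "h y = h y'" and ne: "y \<noteq> y'"
    obtain i where i: "i < n" "seqdist ((shift ^^ i) y) ((shift ^^ i) y') > \<epsilon>"
      using sepE y y' ne by (auto simp: Fb_def)
    obtain j where j: "j < m" "y (i + j) \<noteq> y' (i + j)"
      using seqdist_gt[OF i(2) \<epsilon> m] by (auto simp: shift_pow_apply)
    have ww: "word n y = word n y'" using y y' by (simp add: Fb_def)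
    show False
    proof (cases "i + j < n")
      case True thus False using ww j word_eq_iff by metis
    next
      case False
      hence "h y ! (i + j - n) = y (i + j)" "h y' ! (i + j - n) = y' (i + j)"
        using i j by (auto simp: h_def)
      thus False using hh j by simp
    qed
  qed
  have "h ` Fb \<subseteq> {xs. set xs \<subseteq> {1..l} \<and> length xs = m}"
    using EY Y_sub unfolding h_def Fb_def by fastforce
  hence "card (h ` Fb) \<le> card {xs. set xs \<subseteq> {1..l} \<and> length xs = m}"
    by (intro card_mono) (auto simp: finite_lists_length_eq)
  also have "\<dots> = l ^ m" by (simp add: card_lists_length_eq)
  finally show ?thesis using card_image[OF inj] by (simp add: Fb_def)
qed

lemma sep_upper: assumes n: "n \<ge> 1" and E: "separated Y n \<epsilon> E" and \<epsilon>: "\<epsilon> > 0" and m: "(1/2::real) ^ m \<le> \<epsilon>"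
  shows "(\<Sum>y\<in>E. gtilde X \<pi> f n y) \<le> M * l ^ m * Sp n"
proof -
  have finE: "finite E" and EY: "E \<subseteq> Y" using E by (auto simp: separated_def)
  have img: "word n ` E \<subseteq> Bn n Y" using EY by (auto simp: Bn_def)
  have "(\<Sum>y\<in>E. gtilde X \<pi> f n y) \<le> (\<Sum>y\<in>E. M * G n y)"
    by (intro sum_mono gt_bounds[OF n])
  also have "\<dots> = M * (\<Sum>w\<in>Bn n Y. \<Sum>y\<in>{y \<in> E. word n y = w}. G n y)"
    by (simp add: sum_distrib_left[symmetric] sum.group[OF finE finBY img])
  also have "(\<Sum>w\<in>Bn n Y. \<Sum>y\<in>{y \<in> E. word n y = w}. G n y) \<le> (\<Sum>w\<in>Bn n Y. real (l ^ m) * G n (yw w))"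
  proof (rule sum_mono)
    fix w assume w: "w \<in> Bn n Y"
    have "(\<Sum>y\<in>{y \<in> E. word n y = w}. G n y) = (\<Sum>y\<in>{y \<in> E. word n y = w}. G n (yw w))"
      by (intro sum.cong refl) (metis (mono_tags, lifting) G_def U_word mem_Collect_eq w yw_in(2))
    also have "\<dots> = real (card {y \<in> E. word n y = w}) * G n (yw w)" by simp
    also have "\<dots> \<le> real (l ^ m) * G n (yw w)"
      using fiber_card[OF n E \<epsilon> m, of w] G_nonneg[OF n] by (intro mult_right_mono) auto
    finally show "(\<Sum>y\<in>{y \<in> E. word n y = w}. G n y) \<le> real (l ^ m) * G n (yw w)" .
  qed
  also have "(\<Sum>w\<in>Bn n Y. real (l ^ m) * G n (yw w)) = l ^ m * Sp n"
    by (simp add: sum_distrib_left[symmetric] Sp_sum)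
  finally show ?thesis using M_ge1 by (simp add: mult_left_mono mult.assoc)
qed

lemma S_eq: "S_sum X Y \<pi> f n = (\<Sum>w\<in>Bn n Y. gtilde X \<pi> f n (yw w))"
  unfolding S_sum_def coef_a_def yw_def by (intro sum.cong refl) (simp add: Bn_length)

lemma sep_lower: assumes n: "n \<ge> 1" and \<epsilon>: "\<epsilon> < 1"
  shows "separated Y n \<epsilon> (yw ` Bn n Y)" "(\<Sum>y\<in>yw ` Bn n Y. gtilde X \<pi> f n y) = S_sum X Y \<pi> f n"
proof -
  have inj: "inj_on yw (Bn n Y)" by (rule inj_onI) (metis yw_in(2))
  show "(\<Sum>y\<in>yw ` Bn n Y. gtilde X \<pi> f n y) = S_sum X Y \<pi> f n"
    unfolding S_eq by (simp add: sum.reindex[OF inj])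
  have "\<exists>i<n. seqdist ((shift ^^ i) y) ((shift ^^ i) y') > \<epsilon>"
    if y: "y \<in> yw ` Bn n Y" and y': "y' \<in> yw ` Bn n Y" and ne: "y \<noteq> y'" for y y'
  proof -
    obtain w w' where w: "w \<in> Bn n Y" "y = yw w" and w': "w' \<in> Bn n Y" "y' = yw w'" using y y' by auto
    have "w \<noteq> w'" using ne w w' by auto
    hence "word n y \<noteq> word n y'" using w w' yw_in(2) by metis
    then obtain i where i: "i < n" "y i \<noteq> y' i" using word_eq_iff by metis
    have d: "((shift ^^ i) y) 0 \<noteq> ((shift ^^ i) y') 0" using i by (simp add: shift_pow_apply)
    hence "(LEAST j. (shift ^^ i) y j \<noteq> (shift ^^ i) y' j) = 0" by (intro Least_equality) auto
    hence "seqdist ((shift ^^ i) y) ((shift ^^ i) y') = 1" using d by (auto simp: seqdist_def)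
    thus ?thesis using i \<epsilon> by auto
  qed
  thus "separated Y n \<epsilon> (yw ` Bn n Y)" unfolding separated_def
    using finBY yw_in(1) by blast
qed

end


context setting begin

lemma main: "\<exists>K1 K2. K1 > 0 \<and> K2 > 0 \<and> (\<forall>n\<ge>1.
           K1 \<le> exp (real n * pressure Y (gtilde X \<pi> f)) / S_sum X Y \<pi> f n \<and>
           exp (real n * pressure Y (gtilde X \<pi> f)) / S_sum X Y \<pi> f n \<le> K2)"
proof -
  obtain A B where AB: "A > 0" "B > 0"
    and ABq: "\<And>n m. n \<ge> 1 \<Longrightarrow> m \<ge> 1 \<Longrightarrow> Sp (n + m) \<le> A * Sp n * Sp m \<and> B * Sp n * Sp m \<le> Sp (n + m)"
    using Sp_quasi by blast
  obtain Q where Q: "\<And>n. n \<ge> 1 \<Longrightarrow> ln B + ln (Sp n) \<le> real n * Q \<and> real n * Q \<le> ln A + ln (Sp n)"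
    using quasi_mult[of Sp A B] Sp_pos AB ABq by blast
  have lim: "(\<lambda>n. (c + ln (Sp n)) / real n) \<longlonglongrightarrow> Q" for c
  proof (rule lim_sandwich_n[where D="\<bar>c\<bar> + \<bar>ln A\<bar> + \<bar>ln B\<bar>"])
    fix n :: nat assume n: "n \<ge> 1"
    have "ln B + ln (Sp n) \<le> real n * Q" "real n * Q \<le> ln A + ln (Sp n)" using Q[OF n] by auto
    moreover have "c \<le> \<bar>c\<bar>" "- c \<le> \<bar>c\<bar>" "ln A \<le> \<bar>ln A\<bar>" "- ln A \<le> \<bar>ln A\<bar>"
      "ln B \<le> \<bar>ln B\<bar>" "- ln B \<le> \<bar>ln B\<bar>" by auto
    ultimately show "\<bar>c + ln (Sp n) - real n * Q\<bar> \<le> \<bar>c\<bar> + \<bar>ln A\<bar> + \<bar>ln B\<bar>"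
      by (simp add: abs_le_iff)
  qed
  have inner: "limsup (\<lambda>n. ereal (ln (SUP E \<in> {E. separated Y n \<epsilon> E}. (\<Sum>x\<in>E. gtilde X \<pi> f n x)) / real n)) = ereal Q"
    if \<epsilon>: "0 < \<epsilon>" "\<epsilon> < 1" for \<epsilon> :: real
  proof -
    obtain m where m: "(1/2::real) ^ m < \<epsilon>" using real_arch_pow_inv[of \<epsilon> "1/2"] \<epsilon> by auto
    have m': "(1/2::real) ^ m \<le> \<epsilon>" using m by simp
    define c where "c = ln (M * l ^ m)"
    have Mlpos: "M * l ^ m > 0" using M_ge1 l_pos by simp
    define SS where "SS n = (SUP E \<in> {E. separated Y n \<epsilon> E}. (\<Sum>x\<in>E. gtilde X \<pi> f n x))" for n
    have bnd: "ln (Sp n) / real n \<le> ln (SS n) / real n \<and> ln (SS n) / real n \<le> (c + ln (Sp n)) / real n"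
      if n: "n \<ge> 1" for n
    proof -
      have bdd: "bdd_above ((\<lambda>E. \<Sum>x\<in>E. gtilde X \<pi> f n x) ` {E. separated Y n \<epsilon> E})"
        using sep_upper[OF n _ \<epsilon>(1) m'] by (auto intro!: bdd_aboveI2)
      have "S_sum X Y \<pi> f n \<le> SS n" unfolding SS_def
        using cSUP_upper[OF _ bdd, of "yw ` Bn n Y"] sep_lower[OF n \<epsilon>(2)] by simp
      hence lo: "Sp n \<le> SS n" using S_bounds(1)[OF n] by simp
      have up: "SS n \<le> M * l ^ m * Sp n" unfolding SS_def
        using sep_lower(1)[OF n \<epsilon>(2)] sep_upper[OF n _ \<epsilon>(1) m'] by (intro cSUP_least) auto
      have sp: "Sp n > 0" using Sp_pos[OF n] .
      have "ln (Sp n) \<le> ln (SS n)" using lo sp by simp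
      moreover have "ln (SS n) \<le> ln (M * l ^ m * Sp n)" using up lo sp by simp
      moreover have "ln (M * l ^ m * Sp n) = c + ln (Sp n)" using Mlpos sp unfolding c_def by (rule ln_mult_pos)
      ultimately show ?thesis using n by (simp add: divide_right_mono)
    qed
    have "(\<lambda>n. ln (SS n) / real n) \<longlonglongrightarrow> Q"
    proof (rule tendsto_sandwich[OF _ _ lim[of 0] lim[of c]])
      show "\<forall>\<^sub>F n in sequentially. (0 + ln (Sp n)) / real n \<le> ln (SS n) / real n"
        using eventually_ge_at_top[of 1] by eventually_elim (use bnd in auto)
      show "\<forall>\<^sub>F n in sequentially. ln (SS n) / real n \<le> (c + ln (Sp n)) / real n"
        using eventually_ge_at_top[of 1] by eventually_elim (use bnd in auto)
    qed
    hence "(\<lambda>n. ereal (ln (SS n) / real n)) \<longlonglongrightarrow> ereal Q" by (rule tendsto_ereal)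
    hence "limsup (\<lambda>n. ereal (ln (SS n) / real n)) = ereal Q"
      by (intro lim_imp_Limsup) auto
    thus ?thesis by (simp add: SS_def)
  qed
  have PQ: "pressure Y (gtilde X \<pi> f) = Q"
  proof -
    let ?h = "\<lambda>\<epsilon>::real. limsup (\<lambda>n. ereal (ln (SUP E \<in> {E. separated Y n \<epsilon> E}. (\<Sum>x\<in>E. gtilde X \<pi> f n x)) / real n))"
    have ev: "eventually (\<lambda>\<epsilon>. (\<lambda>_. ereal Q) \<epsilon> = ?h \<epsilon>) (at_right (0::real))"
      unfolding eventually_at_right_field using inner by (intro exI[of _ 1]) auto
    have "(?h \<longlongrightarrow> ereal Q) (at_right 0)"
      using tendsto_cong[OF ev] tendsto_const by blast
    hence "Lim (at_right 0) ?h = ereal Q" by (intro tendsto_Lim) auto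
    thus ?thesis unfolding pressure_def by simp
  qed
  have fin: "B / M \<le> exp (real n * Q) / S_sum X Y \<pi> f n \<and> exp (real n * Q) / S_sum X Y \<pi> f n \<le> A"
    if n: "n \<ge> 1" for n
  proof -
    have sp: "Sp n > 0" using Sp_pos[OF n] .
    have e1: "B * Sp n \<le> exp (real n * Q)"
    proof -
      have "exp (ln B + ln (Sp n)) \<le> exp (real n * Q)" using Q[OF n] by simp
      thus ?thesis using AB sp by (simp add: exp_add)
    qed
    have e2: "exp (real n * Q) \<le> A * Sp n"
    proof -
      have "exp (real n * Q) \<le> exp (ln A + ln (Sp n))" using Q[OF n] by simp
      thus ?thesis using AB sp by (simp add: exp_add)
    qed
    have s1: "Sp n \<le> S_sum X Y \<pi> f n" and s2: "S_sum X Y \<pi> f n \<le> M * Sp n" using S_bounds[OF n] by auto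
    have Spos: "S_sum X Y \<pi> f n > 0" using s1 sp by simp
    have "exp (real n * Q) \<le> A * S_sum X Y \<pi> f n" using e2 s1 AB by (meson mult_left_mono less_imp_le order_trans)
    hence r2: "exp (real n * Q) / S_sum X Y \<pi> f n \<le> A" using Spos by (simp add: divide_simps)
    have "B * S_sum X Y \<pi> f n \<le> B * (M * Sp n)" using s2 AB by simp
    also have "\<dots> = M * (B * Sp n)" by simp
    also have "\<dots> \<le> M * exp (real n * Q)" using e1 M_ge1 by simp
    finally have "B * S_sum X Y \<pi> f n \<le> M * exp (real n * Q)" .
    hence r1: "B / M \<le> exp (real n * Q) / S_sum X Y \<pi> f n" using Spos M_ge1
      by (simp add: divide_simps mult.commute)
    show ?thesis using r1 r2 by simp
  qed
  show ?thesis unfolding PQ using fin AB M_ge1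
    by (intro exI[of _ "B / M"] exI[of _ A]) auto
qed

end


theorem lemma3p8:
  fixes k l :: nat and X Y :: "(nat \<Rightarrow> nat) set"
    and \<pi> :: "(nat \<Rightarrow> nat) \<Rightarrow> (nat \<Rightarrow> nat)"
    and f :: "nat \<Rightarrow> (nat \<Rightarrow> nat) \<Rightarrow> real"
  assumes "subshift k X" and "subshift l Y"
    and "one_block_factor X Y \<pi>"
    and "has_specification X"
    and "almost_additive X f" and "bounded_variation X f"
  shows "\<exists>K1 K2. K1 > 0 \<and> K2 > 0 \<and> (\<forall>n\<ge>1.
           K1 \<le> exp (real n * pressure Y (gtilde X \<pi> f)) / S_sum X Y \<pi> f n \<and>
           exp (real n * pressure Y (gtilde X \<pi> f)) / S_sum X Y \<pi> f n \<le> K2)"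
proof -
  have sX: "X \<noteq> {}" "X \<subseteq> {x. \<forall>i. x i \<in> {1..k}}" "shift ` X \<subseteq> X"
    using assms(1) by (auto simp: subshift_def)
  have sY: "Y \<subseteq> {x. \<forall>i. x i \<in> {1..l}}" using assms(2) by (simp add: subshift_def)
  obtain \<phi> where fac: "\<pi> ` X = Y" "\<forall>x\<in>X. \<pi> x = \<phi> \<circ> x"
  proof -
    from assms(3) obtain \<phi> where "\<forall>x\<in>X. \<pi> x = \<phi> \<circ> x" and "\<pi> ` X = Y"
      unfolding one_block_factor_def by blast
    thus ?thesis using that by blast
  qed
  obtain p where sp: "p > 0" "\<forall>u\<in>language X. \<forall>v\<in>language X. u \<noteq> [] \<longrightarrow> v \<noteq> [] \<longrightarrow> (\<exists>w. length w = p \<and> u @ w @ v \<in> language X)"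
    using assms(4) by (auto simp: has_specification_def)
  obtain C where aa: "\<forall>n\<ge>1. \<forall>x\<in>X. f n x > 0" "C > 0" "\<forall>n\<ge>1. \<forall>m\<ge>1. \<forall>x\<in>X.
        exp (-C) * f n x * f m ((shift ^^ n) x) \<le> f (n + m) x \<and>
        f (n + m) x \<le> exp C * f n x * f m ((shift ^^ n) x)"
    using assms(5) unfolding almost_additive_def by blast
  obtain M where bvM: "\<forall>n\<ge>1. \<forall>x\<in>X. \<forall>x'\<in>X. (\<forall>i<n. x i = x' i) \<longrightarrow> f n x \<le> M * f n x'"
    using assms(6) unfolding bounded_variation_def by blast
  interpret setting k l X Y \<pi> f \<phi> C M p
    using sX sY fac sp aa bvM by unfold_locales auto
  show ?thesis by (rule main)
qed

end
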